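(* Let $n\ge3$ and let $\mathcal{P}=(V_0,\dots,V_{n-1})$ be an $n$-gon. The following are equivalent: (I) $\mathcal{P}$ is ordinary and locally-strictly convex; (II) $\mathcal{P}$ is quasi-strictly convex; (III) $\mathcal{P}$ is strictly convex.
   Context: A polygon is a finite sequence $\mathcal{P}=(V_0,\dots,V_{n-1})$ of points of $\mathbb{R}^2$, with $V_n:=V_0$, $V_{-1}:=V_{n-1}$, and $i\oplus1:=i+1$ for $i\le n-2$, $(n-1)\oplus1:=0$. $\mathcal{P}$ is convex if $\bigcup_{i=0}^{n-1}\operatorname{conv}\{V_i,V_{i+1}\}=\partial\operatorname{conv}\{V_0,\dots,V_{n-1}\}$. $\mathcal{P}$ is ordinary if $V_i\ne V_j$ for all distinct $i,j\in\{0,\dots,n-1\}$; locally-strict if $V_{i-1},V_i,V_{i+1}$ are non-collinear for every $i\in\{0,\dots,n-1\}$; quasi-strict if for every $i\in\{0,\dots,n-1\}$ and every $j\in\{0,\dots,n-1\}\setminus\{i,i\oplus1\}$ the points $V_i,V_{i\oplus1},V_j$ are non-collinear; strict if $V_i,V_j,V_k$ are non-collinear for any three distinct indices. "Locally-strictly convex", "quasi-strictly convex", "strictly convex" mean the respective property together with convexity. *)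

theory Defs
  imports "HOL-Analysis.Analysis"
begin

text \<open>An n-gon is represented by n and a map V :: nat => real^2; only V 0, ..., V (n-1) matter.
  Index arithmetic is cyclic: the successor of i is (i+1) mod n, the predecessor is (i+n-1) mod n.\<close>

definition succ_idx :: "nat \<Rightarrow> nat \<Rightarrow> nat" where
  "succ_idx n i = (i + 1) mod n"

definition pred_idx :: "nat \<Rightarrow> nat \<Rightarrow> nat" where
  "pred_idx n i = (i + n - 1) mod n"

definition polygon_convex :: "nat \<Rightarrow> (nat \<Rightarrow> real^2) \<Rightarrow> bool" where
  "polygon_convex n V \<longleftrightarrow>
     (\<Union>i<n. closed_segment (V i) (V (succ_idx n i))) = frontier (convex hull (V ` {..<n}))"

definition polygon_ordinary :: "nat \<Rightarrow> (nat \<Rightarrow> real^2) \<Rightarrow> bool" where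
  "polygon_ordinary n V \<longleftrightarrow> (\<forall>i<n. \<forall>j<n. i \<noteq> j \<longrightarrow> V i \<noteq> V j)"

definition polygon_locally_strict :: "nat \<Rightarrow> (nat \<Rightarrow> real^2) \<Rightarrow> bool" where
  "polygon_locally_strict n V \<longleftrightarrow>
     (\<forall>i<n. \<not> collinear {V (pred_idx n i), V i, V (succ_idx n i)})"

definition polygon_quasi_strict :: "nat \<Rightarrow> (nat \<Rightarrow> real^2) \<Rightarrow> bool" where
  "polygon_quasi_strict n V \<longleftrightarrow>
     (\<forall>i<n. \<forall>j<n. j \<noteq> i \<and> j \<noteq> succ_idx n i \<longrightarrow>
        \<not> collinear {V i, V (succ_idx n i), V j})"

definition polygon_strict :: "nat \<Rightarrow> (nat \<Rightarrow> real^2) \<Rightarrow> bool" where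
  "polygon_strict n V \<longleftrightarrow>
     (\<forall>i<n. \<forall>j<n. \<forall>k<n. i \<noteq> j \<and> j \<noteq> k \<and> i \<noteq> k \<longrightarrow> \<not> collinear {V i, V j, V k})"

end

theory Submission
  imports Defs
begin

lemma support_frontier:
  fixes S :: "(real^2) set"
  assumes "convex S" "x \<in> frontier S"
  obtains a where "a \<noteq> 0" "\<And>y. y \<in> S \<Longrightarrow> a \<bullet> x \<le> a \<bullet> y"
proof (cases "interior S = {}")
  case True
  then obtain a b where ab: "a \<noteq> 0" "S \<subseteq> {x. a \<bullet> x = b}"
    using empty_interior_subset_hyperplane assms(1) by metis
  have "closure S \<subseteq> {x. a \<bullet> x = b}"
    using ab(2) closed_hyperplane closure_minimal by blast
  then have "a \<bullet> x = b" using assms(2) frontier_def by auto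
  then show ?thesis using that[of a] ab by force
next
  case False
  have "x \<in> closure S" "x \<notin> rel_interior S"
    using assms(2) False rel_interior_nonempty_interior frontier_def by auto
  then obtain a where "a \<noteq> 0" "\<And>y. y \<in> closure S \<Longrightarrow> a \<bullet> x \<le> a \<bullet> y"
    using supporting_hyperplane_relative_frontier assms(1) by metis
  then show ?thesis using that closure_subset by blast
qed

lemma line_collinear:
  fixes a :: "real^2"
  assumes "a \<noteq> 0"
  shows "collinear {x. a \<bullet> x = r}"
  using assms by (simp add: collinear_aff_dim)

lemma key:
  fixes S :: "(real^2) set"
  assumes "convex S" "midpoint u w \<in> frontier S" "u \<in> S" "w \<in> S" "p \<in> S" "q \<in> S"
    "u \<in> open_segment p q"
  shows "collinear {p, q, w}"
proof -
  obtain a where a: "a \<noteq> 0" "\<And>y. y \<in> S \<Longrightarrow> a \<bullet> midpoint u w \<le> a \<bullet> y"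
    using support_frontier assms(1,2) by metis
  have m: "a \<bullet> midpoint u w = (a \<bullet> u + a \<bullet> w) / 2"
    by (simp add: midpoint_def inner_add_right inner_scaleR_right)
  have h1: "a \<bullet> midpoint u w \<le> a \<bullet> u" "a \<bullet> midpoint u w \<le> a \<bullet> w"
    using a(2)[OF assms(3)] a(2)[OF assms(4)] by auto
  have ar: "\<And>x y z::real. x \<le> y \<Longrightarrow> x \<le> z \<Longrightarrow> x = (y+z)/2 \<Longrightarrow> y = x \<and> z = x"
    by auto
  have uw1: "a \<bullet> u = a \<bullet> midpoint u w"
    using ar[OF h1 m] by blast
  have uw2: "a \<bullet> w = a \<bullet> midpoint u w"
    using ar[OF h1 m] by blast
  note uw = uw1 uw2
  obtain t where t: "0 < t" "t < 1" "u = (1 - t) *\<^sub>R p + t *\<^sub>R q"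
    using assms(7) by (auto simp: in_segment)
  have "a \<bullet> u = (1 - t) * (a \<bullet> p) + t * (a \<bullet> q)"
    using t(3) by (simp add: inner_add_right inner_scaleR_right)
  moreover have "a \<bullet> p \<ge> a \<bullet> u" "a \<bullet> q \<ge> a \<bullet> u"
    using a(2)[OF assms(5)] a(2)[OF assms(6)] uw by auto
  ultimately have "a \<bullet> p = a \<bullet> u \<and> a \<bullet> q = a \<bullet> u"
    using t(1,2)
  proof -
    assume e0: "a \<bullet> u = (1 - t) * (a \<bullet> p) + t * (a \<bullet> q)"
      and g: "a \<bullet> p \<ge> a \<bullet> u" "a \<bullet> q \<ge> a \<bullet> u"
    have e: "(1 - t) * (a \<bullet> p - a \<bullet> u) + t * (a \<bullet> q - a \<bullet> u) = 0"
      using e0 by (simp add: algebra_simps)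
    have n1: "(1 - t) * (a \<bullet> p - a \<bullet> u) \<ge> 0" using t(2) g(1) by simp
    have n2: "t * (a \<bullet> q - a \<bullet> u) \<ge> 0" using t(1) g(2) by simp
    have z1: "(1 - t) * (a \<bullet> p - a \<bullet> u) = 0" using e n1 n2 by linarith
    have z2: "t * (a \<bullet> q - a \<bullet> u) = 0" using e n1 n2 by linarith
    show ?thesis using z1 z2 t(1,2) by simp
  qed
  then have "{p, q, w} \<subseteq> {x. a \<bullet> x = a \<bullet> u}" using uw by auto
  then show ?thesis using line_collinear[OF a(1)] collinear_subset by blast
qed



lemma succ_eq: "i < n \<Longrightarrow> succ_idx n i = (if i = n - 1 then 0 else i + 1)"
  unfolding succ_idx_def by (auto simp: mod_if)

lemma pred_eq: "i < n \<Longrightarrow> pred_idx n i = (if i = 0 then n - 1 else i - 1)"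
proof -
  assume i: "i < n"
  show ?thesis
  proof (cases "i = 0")
    case True then show ?thesis using i unfolding pred_idx_def by simp
  next
    case False
    then have "i + n - 1 = (i - 1) + n" using i by simp
    moreover have "((i - 1) + n) mod n = i - 1" using i by simp
    ultimately show ?thesis using False i unfolding pred_idx_def by simp
  qed
qed

lemma idx_facts:
  assumes "n \<ge> 3" "i < n"
  shows "succ_idx n i < n" "pred_idx n i < n" "succ_idx n (pred_idx n i) = i"
    "succ_idx n i \<noteq> i" "pred_idx n i \<noteq> i" "pred_idx n i \<noteq> succ_idx n i"
    "pred_idx n (succ_idx n i) = i"
  using assms by (simp_all add: succ_eq pred_eq; arith)+

lemma no_between:
  fixes V :: "nat \<Rightarrow> real^2"
  assumes n: "n \<ge> 3" and cv: "polygon_convex n V" and ls: "polygon_locally_strict n V"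
    and ijk: "i < n" "j < n" "k < n" and ne: "V i \<noteq> V k"
    and bt: "V j \<in> open_segment (V i) (V k)"
  shows False
proof -
  define S where "S = convex hull (V ` {..<n})"
  have cS: "convex S" unfolding S_def by simp
  have inS: "V m \<in> S" if "m < n" for m
    unfolding S_def using that by (simp add: hull_inc)
  have edge: "closed_segment (V m) (V (succ_idx n m)) \<subseteq> frontier S" if "m < n" for m
    using cv that unfolding polygon_convex_def S_def by blast
  define p where "p = pred_idx n j"
  define s where "s = succ_idx n j"
  have ps: "p < n" "s < n" "succ_idx n p = j"
    using idx_facts[OF n ijk(2)] p_def s_def by auto
  have c1: "collinear {V i, V k, V s}"
  proof (rule key[OF cS _ inS[OF ijk(2)] inS[OF ps(2)] inS[OF ijk(1)] inS[OF ijk(3)] bt])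
    show "midpoint (V j) (V s) \<in> frontier S"
      using edge[OF ijk(2)] s_def midpoint_in_closed_segment by blast
  qed
  have c2: "collinear {V i, V k, V p}"
  proof (rule key[OF cS _ inS[OF ijk(2)] inS[OF ps(1)] inS[OF ijk(1)] inS[OF ijk(3)] bt])
    have "midpoint (V p) (V j) \<in> frontier S"
      using edge[OF ps(1)] unfolding ps(3) by (meson midpoint_in_closed_segment subsetD)
    then show "midpoint (V j) (V p) \<in> frontier S" by (simp add: midpoint_sym)
  qed
  have c3: "collinear {V i, V k, V j}"
  proof -
    have "between (V i, V k) (V j)" using bt by (simp add: between_mem_segment open_closed_segment)
    then have "collinear {V i, V j, V k}" by (rule between_imp_collinear)
    then show ?thesis by (simp add: insert_commute)
  qed
  have "collinear (insert (V i) (insert (V k) {V p, V j, V s}))"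
  proof (rule iffD2[OF collinear_triples[OF ne]])
    show "\<forall>x\<in>{V p, V j, V s}. collinear {V i, V k, x}"
      using c1 c2 c3 by blast
  qed
  then have "collinear {V p, V j, V s}"
    by (rule collinear_subset) blast
  then show False using ls ijk(2) p_def s_def unfolding polygon_locally_strict_def by auto
qed

theorem proposition1p14:
  fixes n :: nat and V :: "nat \<Rightarrow> real^2"
  assumes "n \<ge> 3"
  shows "((polygon_ordinary n V \<and> polygon_locally_strict n V \<and> polygon_convex n V)
            \<longleftrightarrow> (polygon_quasi_strict n V \<and> polygon_convex n V))
       \<and> ((polygon_quasi_strict n V \<and> polygon_convex n V)
            \<longleftrightarrow> (polygon_strict n V \<and> polygon_convex n V))"
proof -
  have AC: "polygon_strict n V"
    if o: "polygon_ordinary n V" and ls: "polygon_locally_strict n V" and cv: "polygon_convex n V"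
  proof -
    have nb: "\<not> between (V a, V b) (V c)"
      if "a < n" "b < n" "c < n" "a \<noteq> b" "b \<noteq> c" "a \<noteq> c" for a b c
    proof
      assume bt: "between (V a, V b) (V c)"
      have d: "V a \<noteq> V b" "V b \<noteq> V c" "V a \<noteq> V c"
        using o that unfolding polygon_ordinary_def by auto
      have "V c \<in> open_segment (V a) (V b)"
        using bt d by (auto simp: between_mem_segment open_segment_def)
      then show False using no_between[OF assms cv ls that(1,3,2) d(1)] by blast
    qed
    show ?thesis unfolding polygon_strict_def
    proof (intro allI impI)
      fix i j k assume h: "i < n" "j < n" "k < n" "i \<noteq> j \<and> j \<noteq> k \<and> i \<noteq> k"
      show "\<not> collinear {V i, V j, V k}"
        unfolding collinear_between_cases
        using nb[of j k i] nb[of k i j] nb[of i j k] h by auto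
    qed
  qed
  have CB: "polygon_quasi_strict n V" if st: "polygon_strict n V"
    unfolding polygon_quasi_strict_def
  proof (intro allI impI)
    fix i j assume h: "i < n" "j < n" "j \<noteq> i \<and> j \<noteq> succ_idx n i"
    show "\<not> collinear {V i, V (succ_idx n i), V j}"
    proof -
      have "succ_idx n i < n" "succ_idx n i \<noteq> i" using idx_facts[OF assms h(1)] by auto
      then show ?thesis using st[unfolded polygon_strict_def, rule_format, of i "succ_idx n i" j] h by simp
    qed
  qed
  have BA: "polygon_ordinary n V \<and> polygon_locally_strict n V" if q: "polygon_quasi_strict n V"
  proof
    show "polygon_ordinary n V" unfolding polygon_ordinary_def
    proof (intro allI impI)
      fix i j assume h: "i < n" "j < n" "i \<noteq> j"
      show "V i \<noteq> V j"
      proof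
        assume e: "V i = V j"
        show False
        proof (cases "j = succ_idx n i")
          case True
          define k where "k = succ_idx n j"
          have "k < n" "k \<noteq> j" "k \<noteq> pred_idx n j" using idx_facts[OF assms h(2)] k_def by auto
          moreover have "pred_idx n j = i" using True idx_facts(7)[OF assms h(1)] by simp
          ultimately have "\<not> collinear {V i, V j, V k}"
            using q[unfolded polygon_quasi_strict_def, rule_format, of i k] h True by simp
          then show False using e by simp
        next
          case False
          have "\<not> collinear {V i, V (succ_idx n i), V j}"
            using q[unfolded polygon_quasi_strict_def, rule_format, of i j] h False by simp
          then show False using e by (simp add: insert_commute)
        qed
      qed
    qed
    show "polygon_locally_strict n V" unfolding polygon_locally_strict_def
    proof (intro allI impI)
      fix i assume h: "i < n"
      note f = idx_facts[OF assms h]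
      have "\<not> collinear {V (pred_idx n i), V (succ_idx n (pred_idx n i)), V (succ_idx n i)}"
      proof -
        have "succ_idx n i \<noteq> pred_idx n i" "succ_idx n i \<noteq> succ_idx n (pred_idx n i)"
          using f by auto
        then show ?thesis
          using q[unfolded polygon_quasi_strict_def, rule_format, of "pred_idx n i" "succ_idx n i"] f(1,2) h by simp
      qed
      then show "\<not> collinear {V (pred_idx n i), V i, V (succ_idx n i)}" using f by simp
    qed
  qed
  show ?thesis using AC CB BA by blast
qed

end
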